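(* Let $f\colon[a,b]\to\mathbb{R}$ be Laplace integrable on $[a,b]$ and let $F(x)=\int_a^xf$ for $x\in[a,b]$. Then $F$ is continuous on $[a,b]$.
   Context: Laplace derivates: for $F$ Perron integrable near $x$ and $\delta>0$, $\underline{LD}_1^+F(x)=\liminf_{s\to\infty}s^2\int_0^\delta e^{-st}[F(x+t)-F(x)]dt$, $\overline{LD}_1^+F(x)$ the $\limsup$, $\underline{LD}_1^-F(x)=\liminf_{s\to\infty}(-s^2)\int_0^\delta e^{-st}[F(x-t)-F(x)]dt$, $\overline{LD}_1^-F(x)$ the $\limsup$ (independent of $\delta$); $\underline{LD}_1F=\min(\underline{LD}_1^+F,\underline{LD}_1^-F)$, $\overline{LD}_1F=\max(\overline{LD}_1^+F,\overline{LD}_1^-F)$ (one-sided at endpoints). A major function of $f$ is a continuous $U$ on $[a,b]$ with $\underline{LD}_1U\geqslant f$ and $\underline{LD}_1U>-\infty$ everywhere on $[a,b]$; a minor function is a continuous $V$ with $\overline{LD}_1V\leqslant f$ and $\overline{LD}_1V<\infty$ everywhere. $f$ is Laplace integrable on $[a,b]$ if $\sup\{V(b)-V(a)\}$ over minor functions equals $\inf\{U(b)-U(a)\}$ over major functions and is finite; the common value is $\int_a^bf$ (and $\int_a^x f$ is the integral of $f|_{[a,x]}$, with $\int_a^a f=0$). *)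

theory Defs
  imports "HOL-Analysis.Analysis"
begin

text \<open>The integrals are Henstock-Kurzweil (= Perron) integrals.
  The parameter delta is arbitrary (the derivates do not depend on it); on an
  interval [a,b] we use delta = b - x on the right and delta = x - a on the left.\<close>

definition LD_plus_lower :: "(real \<Rightarrow> real) \<Rightarrow> real \<Rightarrow> real \<Rightarrow> ereal" where
  "LD_plus_lower F x \<delta> = Liminf at_top
     (\<lambda>s::real. ereal (s\<^sup>2 * integral {0..\<delta>} (\<lambda>t. exp (- s * t) * (F (x + t) - F x))))"

definition LD_plus_upper :: "(real \<Rightarrow> real) \<Rightarrow> real \<Rightarrow> real \<Rightarrow> ereal" where
  "LD_plus_upper F x \<delta> = Limsup at_top
     (\<lambda>s::real. ereal (s\<^sup>2 * integral {0..\<delta>} (\<lambda>t. exp (- s * t) * (F (x + t) - F x))))"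

definition LD_minus_lower :: "(real \<Rightarrow> real) \<Rightarrow> real \<Rightarrow> real \<Rightarrow> ereal" where
  "LD_minus_lower F x \<delta> = Liminf at_top
     (\<lambda>s::real. ereal (- (s\<^sup>2) * integral {0..\<delta>} (\<lambda>t. exp (- s * t) * (F (x - t) - F x))))"

definition LD_minus_upper :: "(real \<Rightarrow> real) \<Rightarrow> real \<Rightarrow> real \<Rightarrow> ereal" where
  "LD_minus_upper F x \<delta> = Limsup at_top
     (\<lambda>s::real. ereal (- (s\<^sup>2) * integral {0..\<delta>} (\<lambda>t. exp (- s * t) * (F (x - t) - F x))))"

definition LD_lower :: "real \<Rightarrow> real \<Rightarrow> (real \<Rightarrow> real) \<Rightarrow> real \<Rightarrow> ereal" where
  "LD_lower a b F x =
     (if x = a then LD_plus_lower F x (b - x)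
      else if x = b then LD_minus_lower F x (x - a)
      else min (LD_plus_lower F x (b - x)) (LD_minus_lower F x (x - a)))"

definition LD_upper :: "real \<Rightarrow> real \<Rightarrow> (real \<Rightarrow> real) \<Rightarrow> real \<Rightarrow> ereal" where
  "LD_upper a b F x =
     (if x = a then LD_plus_upper F x (b - x)
      else if x = b then LD_minus_upper F x (x - a)
      else max (LD_plus_upper F x (b - x)) (LD_minus_upper F x (x - a)))"

definition major_fun :: "(real \<Rightarrow> real) \<Rightarrow> real \<Rightarrow> real \<Rightarrow> (real \<Rightarrow> real) \<Rightarrow> bool" where
  "major_fun f a b U \<longleftrightarrow> continuous_on {a..b} U \<and>
     (\<forall>x\<in>{a..b}. LD_lower a b U x \<ge> ereal (f x) \<and> LD_lower a b U x > -\<infinity>)"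

definition minor_fun :: "(real \<Rightarrow> real) \<Rightarrow> real \<Rightarrow> real \<Rightarrow> (real \<Rightarrow> real) \<Rightarrow> bool" where
  "minor_fun f a b V \<longleftrightarrow> continuous_on {a..b} V \<and>
     (\<forall>x\<in>{a..b}. LD_upper a b V x \<le> ereal (f x) \<and> LD_upper a b V x < \<infinity>)"

definition laplace_integrable :: "(real \<Rightarrow> real) \<Rightarrow> real \<Rightarrow> real \<Rightarrow> bool" where
  "laplace_integrable f a b \<longleftrightarrow>
     (SUP V\<in>{V. minor_fun f a b V}. ereal (V b - V a)) =
       (INF U\<in>{U. major_fun f a b U}. ereal (U b - U a)) \<and>
     \<bar>INF U\<in>{U. major_fun f a b U}. ereal (U b - U a)\<bar> \<noteq> \<infinity>"

definition laplace_integral :: "(real \<Rightarrow> real) \<Rightarrow> real \<Rightarrow> real \<Rightarrow> real" where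
  "laplace_integral f a b =
     (if b \<le> a then 0
      else real_of_ereal (INF U\<in>{U. major_fun f a b U}. ereal (U b - U a)))"

end

theory Submission
  imports Defs "HOL-Real_Asymp.Real_Asymp"
begin


lemma cont_integrand:
  fixes F :: "real \<Rightarrow> real" and x s \<delta> :: real
  assumes "continuous_on {x..x+\<delta>} F"
  shows "continuous_on {0..\<delta>} (\<lambda>t. exp (- s * t) * (F (x + t) - F x))"
proof -
  have "continuous_on {0..\<delta>} (\<lambda>t. F (x + t))"
    by (rule continuous_on_compose2[OF assms]) (auto intro!: continuous_intros simp: add_increasing2)
  then show ?thesis by (auto intro!: continuous_intros)
qed

lemma tail_lemma:
  fixes F :: "real \<Rightarrow> real" and x \<delta>1 \<delta>2 :: real
  assumes d1: "0 < \<delta>1" and d12: "\<delta>1 \<le> \<delta>2" and cF: "continuous_on {x..x+\<delta>2} F"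
  shows "((\<lambda>s. s\<^sup>2 * integral {0..\<delta>2} (\<lambda>t. exp (- s * t) * (F (x + t) - F x))
          - s\<^sup>2 * integral {0..\<delta>1} (\<lambda>t. exp (- s * t) * (F (x + t) - F x))) \<longlongrightarrow> 0) at_top"
proof -
  define g where "g = (\<lambda>t. F (x + t) - F x)"
  have cg: "continuous_on {0..\<delta>2} g"
  proof -
    have "continuous_on {0..\<delta>2} (\<lambda>t. F (x + t))"
      by (rule continuous_on_compose2[OF cF]) (auto intro!: continuous_intros)
    then show ?thesis unfolding g_def by (auto intro!: continuous_intros)
  qed
  obtain M where M: "\<And>t. t \<in> {0..\<delta>2} \<Longrightarrow> norm (g t) \<le> M"
    using compact_continuous_image[OF cg compact_Icc] by (meson bounded_iff compact_imp_bounded image_eqI)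
  have lim: "((\<lambda>s. (s\<^sup>2 * exp (- s * \<delta>1)) * (M * (\<delta>2 - \<delta>1))) \<longlongrightarrow> 0) at_top"
  proof -
    have "((\<lambda>s. s\<^sup>2 * exp (- s * \<delta>1)) \<longlongrightarrow> 0) at_top" using d1 by real_asymp
    then show ?thesis by (rule tendsto_mult_left_zero)
  qed
  show ?thesis
  proof (rule Lim_null_comparison[OF _ lim])
    show "\<forall>\<^sub>F s in at_top. norm (s\<^sup>2 * integral {0..\<delta>2} (\<lambda>t. exp (- s * t) * (F (x + t) - F x))
          - s\<^sup>2 * integral {0..\<delta>1} (\<lambda>t. exp (- s * t) * (F (x + t) - F x)))
         \<le> s\<^sup>2 * exp (- s * \<delta>1) * (M * (\<delta>2 - \<delta>1))"
      using eventually_ge_at_top[of 0]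
    proof eventually_elim
      case (elim s)
      have ci: "continuous_on {0..\<delta>2} (\<lambda>t. exp (- s * t) * g t)"
        using cg by (auto intro!: continuous_intros)
      have int: "(\<lambda>t. exp (- s * t) * g t) integrable_on {0..\<delta>2}"
        using ci integrable_continuous_interval by blast
      have comb: "integral {0..\<delta>1} (\<lambda>t. exp (- s * t) * g t) + integral {\<delta>1..\<delta>2} (\<lambda>t. exp (- s * t) * g t)
          = integral {0..\<delta>2} (\<lambda>t. exp (- s * t) * g t)"
        using Henstock_Kurzweil_Integration.integral_combine[OF _ _ int] d1 d12 by simp
      have bnd: "norm (integral {\<delta>1..\<delta>2} (\<lambda>t. exp (- s * t) * g t)) \<le> (exp (- s * \<delta>1) * M) * (\<delta>2 - \<delta>1)"
      proof (rule integral_bound[OF d12])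
        show "continuous_on {\<delta>1..\<delta>2} (\<lambda>t. exp (- s * t) * g t)"
          using ci by (rule continuous_on_subset) (use d1 in auto)
        fix t assume t: "t \<in> {\<delta>1..\<delta>2}"
        have "exp (- s * t) \<le> exp (- s * \<delta>1)" using t elim by (simp add: mult_left_mono)
        moreover have "norm (g t) \<le> M" using M t d1 by auto
        ultimately show "norm (exp (- s * t) * g t) \<le> exp (- s * \<delta>1) * M"
          by (simp add: abs_mult mult_mono)
      qed
      have "norm (s\<^sup>2 * integral {0..\<delta>2} (\<lambda>t. exp (- s * t) * g t) - s\<^sup>2 * integral {0..\<delta>1} (\<lambda>t. exp (- s * t) * g t))
          = s\<^sup>2 * norm (integral {\<delta>1..\<delta>2} (\<lambda>t. exp (- s * t) * g t))"
        using comb[symmetric] by (simp add: algebra_simps abs_mult)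
      also have "\<dots> \<le> s\<^sup>2 * ((exp (- s * \<delta>1) * M) * (\<delta>2 - \<delta>1))"
        using bnd by (simp add: mult_left_mono)
      finally show ?case unfolding g_def by (simp add: algebra_simps)
    qed
  qed
qed



lemma liminf_transfer:
  fixes A B :: "real \<Rightarrow> real" and c :: real
  assumes "ereal c \<le> Liminf at_top (\<lambda>s. ereal (B s))" and "((\<lambda>s. A s - B s) \<longlongrightarrow> 0) at_top"
  shows "ereal c \<le> Liminf at_top (\<lambda>s. ereal (A s))"
  unfolding le_Liminf_iff
proof (intro allI impI)
  fix y assume y: "y < ereal c"
  show "\<forall>\<^sub>F x in at_top. y < ereal (A x)"
  proof (cases y)
    case (real r)
    have r: "r < c" using y real by simp
    have e1: "\<forall>\<^sub>F s in at_top. ereal ((r + c)/2) < ereal (B s)"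
    proof -
      have "ereal ((r + c)/2) < ereal c" using r by simp
      then show ?thesis using assms(1) unfolding le_Liminf_iff by blast
    qed
    have e2: "\<forall>\<^sub>F s in at_top. dist (A s - B s) 0 < (c - r)/2"
      using tendstoD[OF assms(2), of "(c - r)/2"] r by simp
    show ?thesis using e1 e2
    proof eventually_elim
      case (elim s)
      from elim(2) have "\<bar>A s - B s\<bar> < (c - r)/2" by (simp add: dist_real_def)
      moreover from elim(1) have "(r + c)/2 < B s" by simp
      ultimately have "r < A s" by (simp only: abs_less_iff) (simp add: field_simps)
      then show ?case using real by simp
    qed
  next
    case PInf then show ?thesis using y by simp
  next
    case MInf then show ?thesis by simp
  qed
qed

lemma mono_core:
  fixes U V f :: "real \<Rightarrow> real" and c d e p q :: real
  assumes de: "d \<le> e"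
    and U: "continuous_on {c..d} U" and V: "continuous_on {c..e} V"
    and hU: "\<And>y. y \<in> {c..<d} \<Longrightarrow> ereal (f y) \<le> LD_plus_lower U y (d - y)"
    and hV: "\<And>y. y \<in> {c..<d} \<Longrightarrow> LD_plus_upper V y (e - y) \<le> ereal (f y)"
    and pq: "c \<le> p" "p \<le> q" "q \<le> d"
  shows "U p - V p \<le> U q - V q"
proof (rule ccontr)
  assume neg: "\<not> ?thesis"
  define D where "D = (U p - V p) - (U q - V q)"
  have D: "D > 0" using neg D_def by simp
  have pq': "p < q" using neg pq by (cases "p = q") auto
  define \<epsilon> where "\<epsilon> = D / (2 * (q - p))"
  have eps: "\<epsilon> > 0" using D pq' \<epsilon>_def by simp
  define K where "K = (\<lambda>t. U t - V t + \<epsilon> * t)"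
  have Kpq: "K q < K p"
  proof -
    have "\<epsilon> * (q - p) = D / 2" using pq' unfolding \<epsilon>_def by (simp add: field_simps)
    moreover have "K p - K q = D - \<epsilon> * (q - p)" unfolding K_def D_def by (simp add: algebra_simps)
    ultimately show ?thesis using D by linarith
  qed
  have cK: "continuous_on {p..q} K"
  proof -
    have "continuous_on {p..q} U" using U by (rule continuous_on_subset) (use pq in auto)
    moreover have "continuous_on {p..q} V" using V by (rule continuous_on_subset) (use pq de in auto)
    ultimately show ?thesis unfolding K_def by (auto intro!: continuous_intros)
  qed
  obtain x where x: "x \<in> {p..q}" and xmax: "\<And>t. t \<in> {p..q} \<Longrightarrow> K t \<le> K x"
    using continuous_attains_sup[OF compact_Icc _ cK] pq' by auto
  have xq: "x < q"
  proof -
    have "K p \<le> K x" using xmax pq' by auto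
    then have "x \<noteq> q" using Kpq by auto
    then show ?thesis using x by auto
  qed
  define \<eta> where "\<eta> = q - x"
  have eta: "\<eta> > 0" using xq \<eta>_def by simp
  have xy: "x \<in> {c..<d}" using x xq pq by auto
  have etad: "\<eta> \<le> d - x" "\<eta> \<le> e - x" using \<eta>_def pq de by auto
  have cU: "continuous_on {x..x + (d - x)} U" using U by (rule continuous_on_subset) (use x pq in auto)
  have cV: "continuous_on {x..x + (e - x)} V" using V by (rule continuous_on_subset) (use x pq in auto)
  have cUe: "continuous_on {x..x + \<eta>} U" using cU by (rule continuous_on_subset) (use etad in auto)
  have cVe: "continuous_on {x..x + \<eta>} V" using cV by (rule continuous_on_subset) (use etad in auto)
  define JU where "JU = (\<lambda>\<delta> s. s\<^sup>2 * integral {0..\<delta>} (\<lambda>t. exp (- s * t) * (U (x + t) - U x)))"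
  define JV where "JV = (\<lambda>\<delta> s. s\<^sup>2 * integral {0..\<delta>} (\<lambda>t. exp (- s * t) * (V (x + t) - V x)))"
  have tU: "((\<lambda>s. JU (d - x) s - JU \<eta> s) \<longlongrightarrow> 0) at_top"
    unfolding JU_def by (rule tail_lemma[OF eta etad(1) cU])
  have tV: "((\<lambda>s. JV (e - x) s - JV \<eta> s) \<longlongrightarrow> 0) at_top"
    unfolding JV_def by (rule tail_lemma[OF eta etad(2) cV])
  have key: "JU \<eta> s \<le> JV \<eta> s - \<epsilon> * (1 - exp (- s * \<eta>) * (1 + s * \<eta>))" if spos: "s > 0" for s
  proof -
    define G where "G = (\<lambda>t. - exp (- s * t) * (t / s + 1 / s\<^sup>2))"
    have "((\<lambda>t. exp (- s * t) * t) has_integral G \<eta> - G 0) {0..\<eta>}"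
    proof (rule fundamental_theorem_of_calculus)
      show "0 \<le> \<eta>" using eta by simp
      fix t assume "t \<in> {0..\<eta>}"
      have "(G has_real_derivative
              (- (exp (- s * t) * (- s)) * (t / s + 1 / s\<^sup>2) + (- exp (- s * t)) * (1 / s))) (at t within {0..\<eta>})"
        unfolding G_def using spos by (auto intro!: derivative_eq_intros)
      moreover have "(- (exp (- s * t) * (- s)) * (t / s + 1 / s\<^sup>2) + (- exp (- s * t)) * (1 / s)) = exp (- s * t) * t"
        using spos by (simp add: field_simps power2_eq_square)
      ultimately show "(G has_vector_derivative exp (- s * t) * t) (at t within {0..\<eta>})"
        by (simp add: has_real_derivative_iff_has_vector_derivative)
    qed
    moreover have "G \<eta> - G 0 = (1 - exp (- s * \<eta>) * (1 + s * \<eta>)) / s\<^sup>2"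
      using spos unfolding G_def by (simp add: field_simps power2_eq_square)
    ultimately have hI: "((\<lambda>t. exp (- s * t) * t) has_integral (1 - exp (- s * \<eta>) * (1 + s * \<eta>)) / s\<^sup>2) {0..\<eta>}"
      by simp
    have iU: "((\<lambda>t. exp (- s * t) * (U (x + t) - U x)) has_integral integral {0..\<eta>} (\<lambda>t. exp (- s * t) * (U (x + t) - U x))) {0..\<eta>}"
      using integrable_continuous_interval[OF cont_integrand[OF cUe]] by (simp add: integrable_integral)
    have iV: "((\<lambda>t. exp (- s * t) * (V (x + t) - V x)) has_integral integral {0..\<eta>} (\<lambda>t. exp (- s * t) * (V (x + t) - V x))) {0..\<eta>}"
      using integrable_continuous_interval[OF cont_integrand[OF cVe]] by (simp add: integrable_integral)
    have iW: "((\<lambda>t. exp (- s * t) * (V (x + t) - V x) - \<epsilon> * (exp (- s * t) * t)) has_integral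
        integral {0..\<eta>} (\<lambda>t. exp (- s * t) * (V (x + t) - V x)) - \<epsilon> * ((1 - exp (- s * \<eta>) * (1 + s * \<eta>)) / s\<^sup>2)) {0..\<eta>}"
      by (intro has_integral_diff iV has_integral_mult_right hI)
    have le: "integral {0..\<eta>} (\<lambda>t. exp (- s * t) * (U (x + t) - U x))
        \<le> integral {0..\<eta>} (\<lambda>t. exp (- s * t) * (V (x + t) - V x)) - \<epsilon> * ((1 - exp (- s * \<eta>) * (1 + s * \<eta>)) / s\<^sup>2)"
    proof (rule has_integral_le[OF iU iW])
      fix t assume t: "t \<in> {0..\<eta>}"
      have "x + t \<in> {p..q}" using t x \<eta>_def by auto
      then have "K (x + t) \<le> K x" by (rule xmax)
      then have "U (x + t) - U x \<le> V (x + t) - V x - \<epsilon> * t" unfolding K_def by (simp add: algebra_simps)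
      then have "exp (- s * t) * (U (x + t) - U x) \<le> exp (- s * t) * (V (x + t) - V x - \<epsilon> * t)"
        by (simp add: mult_left_mono)
      then show "exp (- s * t) * (U (x + t) - U x) \<le> exp (- s * t) * (V (x + t) - V x) - \<epsilon> * (exp (- s * t) * t)"
        by (simp add: algebra_simps)
    qed
    have "s\<^sup>2 * integral {0..\<eta>} (\<lambda>t. exp (- s * t) * (U (x + t) - U x))
        \<le> s\<^sup>2 * (integral {0..\<eta>} (\<lambda>t. exp (- s * t) * (V (x + t) - V x)) - \<epsilon> * ((1 - exp (- s * \<eta>) * (1 + s * \<eta>)) / s\<^sup>2))"
      using le by (simp add: mult_left_mono)
    also have "\<dots> = JV \<eta> s - \<epsilon> * (1 - exp (- s * \<eta>) * (1 + s * \<eta>))"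
      unfolding JV_def using spos by (simp add: field_simps)
    finally show ?thesis unfolding JU_def .
  qed
  have lim1: "((\<lambda>s. 1 - exp (- s * \<eta>) * (1 + s * \<eta>)) \<longlongrightarrow> 1) at_top" using eta by real_asymp
  have fU: "ereal (f x) \<le> Liminf at_top (\<lambda>s. ereal (JU (d - x) s))"
    using hU[OF xy] unfolding LD_plus_lower_def JU_def by simp
  have fV: "Limsup at_top (\<lambda>s. ereal (JV (e - x) s)) \<le> ereal (f x)"
    using hV[OF xy] unfolding LD_plus_upper_def JV_def by simp
  have e1: "\<forall>\<^sub>F s in at_top. ereal (f x - \<epsilon> / 16) < ereal (JU (d - x) s)"
  proof -
    have "ereal (f x - \<epsilon> / 16) < ereal (f x)" using eps by simp
    then show ?thesis using fU unfolding le_Liminf_iff by blast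
  qed
  have e2: "\<forall>\<^sub>F s in at_top. ereal (JV (e - x) s) < ereal (f x + \<epsilon> / 16)"
  proof -
    have "ereal (f x + \<epsilon> / 16) > ereal (f x)" using eps by simp
    then show ?thesis using fV unfolding Limsup_le_iff by blast
  qed
  have e3: "\<forall>\<^sub>F s in at_top. dist (JU (d - x) s - JU \<eta> s) 0 < \<epsilon> / 16"
    using tendstoD[OF tU, of "\<epsilon>/16"] eps by simp
  have e4: "\<forall>\<^sub>F s in at_top. dist (JV (e - x) s - JV \<eta> s) 0 < \<epsilon> / 16"
    using tendstoD[OF tV, of "\<epsilon>/16"] eps by simp
  have e5: "\<forall>\<^sub>F s in at_top. dist (1 - exp (- s * \<eta>) * (1 + s * \<eta>)) 1 < 1 / 2"
    using tendstoD[OF lim1, of "1/2"] by simp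
  have "\<forall>\<^sub>F s in at_top. s \<noteq> (s::real)"
    using e1 e2 e3 e4 e5 eventually_gt_at_top[of 0]
  proof eventually_elim
    case (elim s)
    have k: "JU \<eta> s \<le> JV \<eta> s - \<epsilon> * (1 - exp (- s * \<eta>) * (1 + s * \<eta>))" using key elim by simp
    have "\<epsilon> * (1 / 2) \<le> \<epsilon> * (1 - exp (- s * \<eta>) * (1 + s * \<eta>))"
      using elim(5) eps by (intro mult_left_mono) (auto simp: dist_real_def)
    moreover have "JU (d - x) s - JU \<eta> s < \<epsilon> / 16" "JV \<eta> s - JV (e - x) s < \<epsilon> / 16"
      using elim(3,4) by (simp_all only: dist_real_def abs_less_iff) linarith+
    moreover have "f x - \<epsilon> / 16 < JU (d - x) s" "JV (e - x) s < f x + \<epsilon> / 16"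
      using elim(1,2) by simp_all
    ultimately show ?case using k eps by linarith
  qed
  then show False by simp
qed



lemma plus_transfer:
  fixes U :: "real \<Rightarrow> real"
  assumes "0 < \<delta>1" "\<delta>1 \<le> \<delta>2" "continuous_on {y..y+\<delta>2} U"
    and "ereal c \<le> LD_plus_lower U y \<delta>2"
  shows "ereal c \<le> LD_plus_lower U y \<delta>1"
proof -
  have t: "((\<lambda>s. s\<^sup>2 * integral {0..\<delta>2} (\<lambda>t. exp (- s * t) * (U (y + t) - U y))
          - s\<^sup>2 * integral {0..\<delta>1} (\<lambda>t. exp (- s * t) * (U (y + t) - U y))) \<longlongrightarrow> 0) at_top"
    by (rule tail_lemma[OF assms(1-3)])
  have t2: "((\<lambda>s. s\<^sup>2 * integral {0..\<delta>1} (\<lambda>t. exp (- s * t) * (U (y + t) - U y))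
          - s\<^sup>2 * integral {0..\<delta>2} (\<lambda>t. exp (- s * t) * (U (y + t) - U y))) \<longlongrightarrow> 0) at_top"
    using tendsto_minus[OF t] by simp
  show ?thesis using liminf_transfer[OF _ t2] assms(4) unfolding LD_plus_lower_def by blast
qed

lemma restrict_major:
  assumes ax: "a < x" "x \<le> b" and U: "major_fun f a b U"
  shows "major_fun f a x U"
proof -
  have cU: "continuous_on {a..b} U" using U unfolding major_fun_def by simp
  have hU: "\<And>y. y \<in> {a..b} \<Longrightarrow> ereal (f y) \<le> LD_lower a b U y" using U unfolding major_fun_def by simp
  have plus: "ereal (f y) \<le> LD_plus_lower U y (x - y)" if y: "y \<in> {a..<x}" "ereal (f y) \<le> LD_plus_lower U y (b - y)" for y
  proof (rule plus_transfer[OF _ _ _ y(2)])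
    show "0 < x - y" "x - y \<le> b - y" using y ax by auto
    show "continuous_on {y..y + (b - y)} U" using cU by (rule continuous_on_subset) (use y in auto)
  qed
  have "ereal (f y) \<le> LD_lower a x U y" if y: "y \<in> {a..x}" for y
  proof -
    have fy: "ereal (f y) \<le> LD_lower a b U y" using hU y ax by auto
    consider "y = a" | "y \<noteq> a" "y = x" | "a < y" "y < x" using y by force
    then show ?thesis
    proof cases
      case 1
      then have "ereal (f y) \<le> LD_plus_lower U y (b - y)" using fy unfolding LD_lower_def by simp
      then show ?thesis using plus[of y] 1 ax unfolding LD_lower_def by simp
    next
      case 2
      then show ?thesis using fy ax unfolding LD_lower_def by (auto split: if_splits)
    next
      case 3
      then have "ereal (f y) \<le> LD_plus_lower U y (b - y)" "ereal (f y) \<le> LD_minus_lower U y (y - a)"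
        using fy ax unfolding LD_lower_def by auto
      then show ?thesis using plus[of y] 3 unfolding LD_lower_def by auto
    qed
  qed
  moreover have "continuous_on {a..x} U" using cU by (rule continuous_on_subset) (use ax in auto)
  moreover have "- \<infinity> < LD_lower a x U y" if "ereal (f y) \<le> LD_lower a x U y" for y
    using less_le_trans[OF _ that, of "- \<infinity>"] by simp
  ultimately show ?thesis unfolding major_fun_def by blast
qed

lemma major_plus:
  assumes "major_fun f a x U" "y \<in> {a..<x}"
  shows "ereal (f y) \<le> LD_plus_lower U y (x - y)"
  using assms unfolding major_fun_def LD_lower_def by (auto split: if_splits)

lemma minor_plus:
  assumes "minor_fun f a b V" "y \<in> {a..<b}"
  shows "LD_plus_upper V y (b - y) \<le> ereal (f y)"
  using assms unfolding minor_fun_def LD_upper_def by (auto split: if_splits)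

lemma maj_min:
  assumes "a < x" "x \<le> b" "major_fun f a x U" "minor_fun f a b V"
  shows "V x - V a \<le> U x - U a"
proof -
  have "U a - V a \<le> U x - V x"
  proof (rule mono_core[of x b a U V f])
    show "continuous_on {a..x} U" using assms(3) unfolding major_fun_def by simp
    show "continuous_on {a..b} V" using assms(4) unfolding minor_fun_def by simp
    show "\<And>y. y \<in> {a..<x} \<Longrightarrow> ereal (f y) \<le> LD_plus_lower U y (x - y)" using major_plus[OF assms(3)] .
    show "\<And>y. y \<in> {a..<x} \<Longrightarrow> LD_plus_upper V y (b - y) \<le> ereal (f y)"
      using minor_plus[OF assms(4)] assms by auto
  qed (use assms in auto)
  then show ?thesis by simp
qed

lemma UV_mono:
  assumes "major_fun f a b U" "minor_fun f a b V" "a \<le> p" "p \<le> q" "q \<le> b"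
  shows "U p - V p \<le> U q - V q"
proof (rule mono_core[of b b a U V f])
  show "continuous_on {a..b} U" using assms(1) unfolding major_fun_def by simp
  show "continuous_on {a..b} V" using assms(2) unfolding minor_fun_def by simp
  show "\<And>y. y \<in> {a..<b} \<Longrightarrow> ereal (f y) \<le> LD_plus_lower U y (b - y)" using major_plus[OF assms(1)] .
  show "\<And>y. y \<in> {a..<b} \<Longrightarrow> LD_plus_upper V y (b - y) \<le> ereal (f y)" using minor_plus[OF assms(2)] .
qed (use assms in auto)

lemma approx:
  assumes ab: "a < b" and U: "major_fun f a b U" and V: "minor_fun f a b V" and x: "x \<in> {a..b}"
  shows "\<bar>laplace_integral f a x - (U x - U a)\<bar> \<le> (U b - U a) - (V b - V a)"
proof (cases "x = a")
  case True
  then show ?thesis using UV_mono[OF U V, of a b] ab unfolding laplace_integral_def by simp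
next
  case False
  then have ax: "a < x" "x \<le> b" using x by auto
  define S where "S = (INF U'\<in>{U'. major_fun f a x U'}. ereal (U' x - U' a))"
  have up: "S \<le> ereal (U x - U a)" unfolding S_def
    by (rule INF_lower2[of U]) (use restrict_major[OF ax U] in auto)
  have lo: "ereal (V x - V a) \<le> S" unfolding S_def
    by (rule INF_greatest) (use maj_min[OF ax _ V] in auto)
  have "laplace_integral f a x = real_of_ereal S" unfolding laplace_integral_def S_def using ax by simp
  moreover have "S = ereal (real_of_ereal S)" using up lo by (cases S) auto
  ultimately have "V x - V a \<le> laplace_integral f a x" "laplace_integral f a x \<le> U x - U a"
    using up lo by (metis ereal_less_eq(3))+
  moreover have "U x - V x \<le> U b - V b" using UV_mono[OF U V, of x b] ax by simp
  ultimately show ?thesis by linarith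
qed



theorem theorem5p2:
  fixes f :: "real \<Rightarrow> real" and a b :: real
  assumes "a < b"
    and "laplace_integrable f a b"
  shows "continuous_on {a..b} (\<lambda>x. laplace_integral f a x)"
proof -
  define I where "I = (INF U\<in>{U. major_fun f a b U}. ereal (U b - U a))"
  have SI: "(SUP V\<in>{V. minor_fun f a b V}. ereal (V b - V a)) = I" and fin: "\<bar>I\<bar> \<noteq> \<infinity>"
    using assms(2) unfolding laplace_integrable_def I_def by auto
  obtain r where r: "I = ereal r" using fin by (cases I) auto
  have good: "\<exists>U V. major_fun f a b U \<and> minor_fun f a b V \<and> (U b - U a) - (V b - V a) < \<epsilon>"
    if e: "\<epsilon> > 0" for \<epsilon>
  proof -
    have "I < ereal (r + \<epsilon>/2)" using r e by simp
    then obtain U where U: "major_fun f a b U" "ereal (U b - U a) < ereal (r + \<epsilon>/2)"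
      unfolding I_def by (auto simp: INF_less_iff)
    have "ereal (r - \<epsilon>/2) < (SUP V\<in>{V. minor_fun f a b V}. ereal (V b - V a))" using SI r e by simp
    then obtain V where V: "minor_fun f a b V" "ereal (r - \<epsilon>/2) < ereal (V b - V a)"
      by (auto simp: less_SUP_iff)
    show ?thesis using U V by (intro exI[of _ U] exI[of _ V]) auto
  qed
  show ?thesis
    unfolding continuous_on_iff
  proof (intro ballI allI impI)
    fix x e :: real assume x: "x \<in> {a..b}" and e: "0 < e"
    obtain U V where U: "major_fun f a b U" and V: "minor_fun f a b V"
      and gap: "(U b - U a) - (V b - V a) < e / 3"
      using good[of "e/3"] e by auto
    have cU: "continuous_on {a..b} U" using U unfolding major_fun_def by simp
    obtain d where d: "d > 0" "\<And>x'. x' \<in> {a..b} \<Longrightarrow> dist x' x < d \<Longrightarrow> dist (U x') (U x) < e / 3"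
      using cU x e unfolding continuous_on_iff by (metis divide_pos_pos zero_less_numeral)
    show "\<exists>d>0. \<forall>x'\<in>{a..b}. dist x' x < d \<longrightarrow> dist (laplace_integral f a x') (laplace_integral f a x) < e"
    proof (intro exI[of _ d] conjI ballI impI)
      show "d > 0" by (rule d)
      fix x' assume x': "x' \<in> {a..b}" and dx: "dist x' x < d"
      have A1: "\<bar>laplace_integral f a x' - (U x' - U a)\<bar> < e / 3"
        using approx[OF assms(1) U V x'] gap by linarith
      have A2: "\<bar>laplace_integral f a x - (U x - U a)\<bar> < e / 3"
        using approx[OF assms(1) U V x] gap by linarith
      have A3: "\<bar>U x' - U x\<bar> < e / 3" using d(2)[OF x' dx] by (simp add: dist_real_def)
      show "dist (laplace_integral f a x') (laplace_integral f a x) < e"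
        unfolding dist_real_def using A1 A2 A3 by linarith
    qed
  qed
qed

end
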